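(* Let $\{G_n\}_{n\ge1}$ be a sequence of graphs with $|V(G_n)|\to\infty$ and $N(H,G_n)>0$ for all $n$, let $H$ be a fixed connected graph, and let $p_n\in(0,1)$ satisfy $\limsup_{n\to\infty}p_n<1$. Then the Horvitz–Thompson estimator $\hat N(H,G_n)$ is consistent for $N(H,G_n)$, i.e. $\hat N(H,G_n)/N(H,G_n)\to1$ in probability, if and only if for every $\varepsilon>0$, $$\lim_{n\to\infty}\frac{1}{N(H,G_n)}\sum_{\substack{A\subset V(G_n)\\ 1\le|A|\le|V(H)|}} t_H(A)\,\mathbf 1\{t_H(A)>\varepsilon\, p_n^{|A|}N(H,G_n)\}=0.$$
   Context: $G_n$ is a simple, labeled, undirected graph with vertex set $V(G_n)=\{1,\dots,|V(G_n)|\}$ and adjacency matrix $(a_{ij})$. $H=(V(H),E(H))$ is a fixed connected graph with $V(H)=\{1,\dots,|V(H)|\}$, and $|Aut(H)|$ is the number of its automorphisms. For $k\ge1$, $V(G_n)_k$ denotes the set of $k$-tuples $\mathbf s=(s_1,\dots,s_k)$ of distinct vertices of $G_n$, and $\bar{\mathbf s}$ the set of entries of $\mathbf s$. For $\mathbf s\in V(G_n)_{|V(H)|}$ let $M_H(\mathbf s)=\prod_{(i,j)\in E(H)}a_{s_is_j}$, and $N(H,G_n)=\frac1{|Aut(H)|}\sum_{\mathbf s\in V(G_n)_{|V(H)|}}M_H(\mathbf s)$ (the number of copies of $H$ in $G_n$). Subgraph sampling: $\{X_v\}_{v\in V(G_n)}$ are i.i.d. Bernoulli$(p_n)$, $X_{\mathbf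 s}=\prod_{u=1}^{|V(H)|}X_{s_u}$, $T(H,G_n)=\frac1{|Aut(H)|}\sum_{\mathbf s\in V(G_n)_{|V(H)|}}M_H(\mathbf s)X_{\mathbf s}$, and $\hat N(H,G_n)=p_n^{-|V(H)|}T(H,G_n)$. For $A\subset V(G_n)$ with $|A|\le|V(H)|$, the local count is $t_H(A)=\frac1{|Aut(H)|}\sum_{\mathbf s\in V(G_n)_{|V(H)|}:\,\bar{\mathbf s}\supseteq A}M_H(\mathbf s)$. *)

theory Defs
  imports "HOL-Probability.Probability" "HOL-Combinatorics.Permutations"
begin

definition simple_graph :: "nat \<Rightarrow> (nat \<Rightarrow> nat \<Rightarrow> bool) \<Rightarrow> bool" where
  "simple_graph m a \<longleftrightarrow> (\<forall>i\<in>{1..m}. \<forall>j\<in>{1..m}. (a i j \<longleftrightarrow> a j i) \<and> \<not> a i i)"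

definition connected_graph :: "nat \<Rightarrow> (nat \<Rightarrow> nat \<Rightarrow> bool) \<Rightarrow> bool" where
  "connected_graph k h \<longleftrightarrow> simple_graph k h \<and> 1 \<le> k \<and>
     (\<forall>i\<in>{1..k}. \<forall>j\<in>{1..k}. (\<lambda>x y. x \<in> {1..k} \<and> y \<in> {1..k} \<and> h x y)\<^sup>*\<^sup>* i j)"

definition edges :: "nat \<Rightarrow> (nat \<Rightarrow> nat \<Rightarrow> bool) \<Rightarrow> (nat \<times> nat) set" where
  "edges k h = {(i,j). i \<in> {1..k} \<and> j \<in> {1..k} \<and> i < j \<and> h i j}"

definition aut_count :: "nat \<Rightarrow> (nat \<Rightarrow> nat \<Rightarrow> bool) \<Rightarrow> nat" where
  "aut_count k h = card {\<sigma>. \<sigma> permutes {1..k} \<and>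
      (\<forall>i\<in>{1..k}. \<forall>j\<in>{1..k}. h (\<sigma> i) (\<sigma> j) \<longleftrightarrow> h i j)}"

definition tuples :: "nat \<Rightarrow> nat \<Rightarrow> (nat \<Rightarrow> nat) set" where
  "tuples k m = {s \<in> {1..k} \<rightarrow>\<^sub>E {1..m}. inj_on s {1..k}}"

definition MH :: "nat \<Rightarrow> (nat \<Rightarrow> nat \<Rightarrow> bool) \<Rightarrow> (nat \<Rightarrow> nat \<Rightarrow> bool) \<Rightarrow> (nat \<Rightarrow> nat) \<Rightarrow> real" where
  "MH k h a s = (\<Prod>(i,j)\<in>edges k h. if a (s i) (s j) then 1 else 0)"

definition NHG :: "nat \<Rightarrow> (nat \<Rightarrow> nat \<Rightarrow> bool) \<Rightarrow> nat \<Rightarrow> (nat \<Rightarrow> nat \<Rightarrow> bool) \<Rightarrow> real" where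
  "NHG k h m a = (1 / real (aut_count k h)) * (\<Sum>s\<in>tuples k m. MH k h a s)"

definition sampling :: "nat \<Rightarrow> real \<Rightarrow> (nat \<Rightarrow> bool) pmf" where
  "sampling m p = Pi_pmf {1..m} False (\<lambda>_. bernoulli_pmf p)"

definition THG :: "nat \<Rightarrow> (nat \<Rightarrow> nat \<Rightarrow> bool) \<Rightarrow> nat \<Rightarrow> (nat \<Rightarrow> nat \<Rightarrow> bool) \<Rightarrow> (nat \<Rightarrow> bool) \<Rightarrow> real" where
  "THG k h m a X = (1 / real (aut_count k h)) *
     (\<Sum>s\<in>tuples k m. MH k h a s * (\<Prod>u\<in>{1..k}. if X (s u) then 1 else 0))"

definition HT_est :: "nat \<Rightarrow> (nat \<Rightarrow> nat \<Rightarrow> bool) \<Rightarrow> nat \<Rightarrow> (nat \<Rightarrow> nat \<Rightarrow> bool) \<Rightarrow> real \<Rightarrow> (nat \<Rightarrow> bool) \<Rightarrow> real" where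
  "HT_est k h m a p X = THG k h m a X / p ^ k"

definition local_count :: "nat \<Rightarrow> (nat \<Rightarrow> nat \<Rightarrow> bool) \<Rightarrow> nat \<Rightarrow> (nat \<Rightarrow> nat \<Rightarrow> bool) \<Rightarrow> nat set \<Rightarrow> real" where
  "local_count k h m a A = (1 / real (aut_count k h)) *
     (\<Sum>s\<in>{s\<in>tuples k m. A \<subseteq> s ` {1..k}}. MH k h a s)"

end

theory Submission
  imports Defs
begin

lemma exp_bind_fin:
  fixes f :: "'b \<Rightarrow> real"
  assumes fin: "finite (set_pmf M)" "\<And>x. x \<in> set_pmf M \<Longrightarrow> finite (set_pmf (N x))"
  shows "measure_pmf.expectation (bind_pmf M N) f =
         measure_pmf.expectation M (\<lambda>x. measure_pmf.expectation (N x) f)"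
proof -
  let ?S = "\<Union>x\<in>set_pmf M. set_pmf (N x)"
  have finS: "finite ?S" using fin by auto
  have "measure_pmf.expectation (bind_pmf M N) f = (\<Sum>z\<in>?S. f z * pmf (bind_pmf M N) z)"
    by (rule integral_measure_pmf_real) (auto simp: finS)
  also have "\<dots> = (\<Sum>z\<in>?S. measure_pmf.expectation M (\<lambda>x. f z * pmf (N x) z))"
    by (simp add: pmf_bind)
  also have "\<dots> = measure_pmf.expectation M (\<lambda>x. \<Sum>z\<in>?S. f z * pmf (N x) z)"
    by (rule Bochner_Integration.integral_sum[symmetric]) (simp add: integrable_measure_pmf_finite fin)
  also have "\<dots> = measure_pmf.expectation M (\<lambda>x. measure_pmf.expectation (N x) f)"
  proof (intro integral_cong_AE AE_pmfI)
    fix x assume x: "x \<in> set_pmf M"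
    show "(\<Sum>z\<in>?S. f z * pmf (N x) z) = measure_pmf.expectation (N x) f"
      by (rule integral_measure_pmf_real[symmetric]) (use x finS in auto)
  qed auto
  finally show ?thesis .
qed

lemma fin_Pi_bern: "finite A \<Longrightarrow> finite (set_pmf (Pi_pmf A False (\<lambda>_. bernoulli_pmf q)))"
  by (subst set_Pi_pmf) (auto intro!: finite_PiE_dflt)

lemma fin_sampling: "finite (set_pmf (sampling m q))"
  unfolding sampling_def by (rule fin_Pi_bern) simp

lemma split_sampling:
  assumes v: "v \<in> {1..m}" and q: "0 \<le> q" "q \<le> 1"
  shows "measure_pmf.expectation (sampling m q) f =
     q * measure_pmf.expectation (Pi_pmf ({1..m} - {v}) False (\<lambda>_. bernoulli_pmf q)) (\<lambda>g. f (g(v:=True)))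
   + (1 - q) * measure_pmf.expectation (Pi_pmf ({1..m} - {v}) False (\<lambda>_. bernoulli_pmf q)) (\<lambda>g. f (g(v:=False)))"
proof -
  let ?A = "{1..m} - {v}"
  have eq: "{1..m} = insert v ?A" using v by auto
  have "sampling m q = bind_pmf (bernoulli_pmf q) (\<lambda>y. map_pmf (\<lambda>g. g(v:=y)) (Pi_pmf ?A False (\<lambda>_. bernoulli_pmf q)))"
    unfolding sampling_def map_pmf_def by (subst eq, subst Pi_pmf_insert') auto
  hence "measure_pmf.expectation (sampling m q) f =
     measure_pmf.expectation (bernoulli_pmf q) (\<lambda>y. measure_pmf.expectation (map_pmf (\<lambda>g. g(v:=y)) (Pi_pmf ?A False (\<lambda>_. bernoulli_pmf q))) f)"
    by (simp only:) (rule exp_bind_fin, auto intro!: fin_Pi_bern)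
  thus ?thesis using q by (simp add: algebra_simps)
qed

lemma E_step:
  assumes v: "v \<in> {1..m}" and q: "0 \<le> q" "q \<le> 1"
  shows "measure_pmf.expectation (sampling m q) (\<lambda>X. (if X v then 1 else 0) * f X) =
         q * measure_pmf.expectation (sampling m q) (\<lambda>X. f (X(v:=True)))"
  using split_sampling[OF v q, of "\<lambda>X. (if X v then 1 else 0) * f X"]
        split_sampling[OF v q, of "\<lambda>X. f (X(v:=True))"]
  by (simp add: algebra_simps)

abbreviation Exq :: "nat \<Rightarrow> real \<Rightarrow> ((nat \<Rightarrow> bool) \<Rightarrow> real) \<Rightarrow> real" where
  "Exq m q f \<equiv> measure_pmf.expectation (sampling m q) f"

abbreviation ind :: "bool \<Rightarrow> real" where "ind b \<equiv> (if b then 1 else 0)"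

lemma Ex_int[simp, intro]: "integrable (measure_pmf (sampling m q)) (f :: (nat \<Rightarrow> bool) \<Rightarrow> real)"
  by (rule integrable_measure_pmf_finite[OF fin_sampling])

lemma Ex_mono: "(\<And>X. f X \<le> g X) \<Longrightarrow> Exq m q f \<le> Exq m q g"
  by (rule integral_mono) auto

lemma Ex_prod_ind:
  assumes "C \<subseteq> {1..m}" "0 \<le> q" "q \<le> 1"
  shows "Exq m q (\<lambda>X. \<Prod>v\<in>C. ind (X v)) = q ^ card C"
proof -
  have "finite C" using assms(1) finite_subset by blast
  thus ?thesis using assms(1)
  proof (induction C rule: finite_induct)
    case empty thus ?case by simp
  next
    case (insert v C)
    have v: "v \<in> {1..m}" using insert by auto
    have "Exq m q (\<lambda>X. \<Prod>u\<in>insert v C. ind (X u)) = Exq m q (\<lambda>X. ind (X v) * (\<Prod>u\<in>C. ind (X u)))"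
      using insert by simp
    also have "\<dots> = q * Exq m q (\<lambda>X. \<Prod>u\<in>C. ind ((X(v:=True)) u))"
      by (rule E_step[OF v assms(2,3)])
    also have "(\<lambda>X. \<Prod>u\<in>C. ind ((X(v:=True)) u)) = (\<lambda>X. \<Prod>u\<in>C. ind (X u))"
      using insert.hyps by (intro ext prod.cong) auto
    finally show ?case using insert by simp
  qed
qed

lemma Ex_prod_ind_mono:
  assumes "C \<subseteq> {1..m}" "0 \<le> q" "q \<le> 1"
    and gmono: "\<And>X Y. (\<And>v. X v \<Longrightarrow> Y v) \<Longrightarrow> g X \<le> g Y" and gnn: "\<And>X. 0 \<le> g X"
  shows "Exq m q (\<lambda>X. (\<Prod>v\<in>C. ind (X v)) * g X) \<ge> q ^ card C * Exq m q g"
proof -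
  have "finite C" using assms(1) finite_subset by blast
  thus ?thesis using assms(1)
  proof (induction C rule: finite_induct)
    case empty thus ?case by simp
  next
    case (insert v C)
    have v: "v \<in> {1..m}" using insert by auto
    have "Exq m q (\<lambda>X. (\<Prod>u\<in>insert v C. ind (X u)) * g X) = Exq m q (\<lambda>X. ind (X v) * ((\<Prod>u\<in>C. ind (X u)) * g X))"
      using insert by (simp add: mult.assoc)
    also have "\<dots> = q * Exq m q (\<lambda>X. (\<Prod>u\<in>C. ind ((X(v:=True)) u)) * g (X(v:=True)))"
      by (rule E_step[OF v assms(2,3)])
    also have "\<dots> \<ge> q * Exq m q (\<lambda>X. (\<Prod>u\<in>C. ind (X u)) * g X)"
    proof (intro mult_left_mono Ex_mono assms(2))
      fix X :: "nat \<Rightarrow> bool"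
      have le: "X u \<Longrightarrow> (X(v:=True)) u" for u by auto
      show "(\<Prod>u\<in>C. ind (X u)) * g X \<le> (\<Prod>u\<in>C. ind ((X(v:=True)) u)) * g (X(v:=True))"
        by (intro mult_mono prod_mono gmono gnn prod_nonneg) (auto simp: le)
    qed
    finally have "q * Exq m q (\<lambda>X. (\<Prod>u\<in>C. ind (X u)) * g X) \<le> Exq m q (\<lambda>X. (\<Prod>u\<in>insert v C. ind (X u)) * g X)" .
    moreover have "q * (q ^ card C * Exq m q g) \<le> q * Exq m q (\<lambda>X. (\<Prod>u\<in>C. ind (X u)) * g X)"
      using insert assms(2) by (intro mult_left_mono) auto
    ultimately show ?case using insert by (simp add: mult.assoc)
  qed
qed

definition w :: "nat \<Rightarrow> (nat \<Rightarrow> nat \<Rightarrow> bool) \<Rightarrow> (nat \<Rightarrow> nat \<Rightarrow> bool) \<Rightarrow> (nat \<Rightarrow> nat) \<Rightarrow> real" where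
  "w k h a s = MH k h a s / real (aut_count k h)"

definition Y :: "nat \<Rightarrow> (nat \<Rightarrow> nat) \<Rightarrow> (nat \<Rightarrow> bool) \<Rightarrow> real" where
  "Y k s X = (\<Prod>u\<in>{1..k}. ind (X (s u)))"

lemma MH_nn: "0 \<le> MH k h a s"
  unfolding MH_def by (intro prod_nonneg) (auto split: prod.splits)

lemma w_nn: "0 \<le> w k h a s"
  unfolding w_def using MH_nn by simp

lemma Y_nn: "0 \<le> Y k s X" unfolding Y_def by (intro prod_nonneg) auto
lemma Y_le1: "Y k s X \<le> 1" unfolding Y_def by (intro prod_le_1) auto

lemma NHG_eq: "NHG k h m a = (\<Sum>s\<in>tuples k m. w k h a s)"
  unfolding NHG_def w_def by (simp add: sum_divide_distrib)

lemma THG_eq: "THG k h m a X = (\<Sum>s\<in>tuples k m. w k h a s * Y k s X)"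
  unfolding THG_def w_def Y_def by (simp add: sum_divide_distrib)

lemma lc_eq: "local_count k h m a A = (\<Sum>s\<in>{s\<in>tuples k m. A \<subseteq> s ` {1..k}}. w k h a s)"
  unfolding local_count_def w_def by (simp add: sum_divide_distrib)

lemma fin_T: "finite (tuples k m)"
proof -
  have "tuples k m \<subseteq> {1..k} \<rightarrow>\<^sub>E {1..m}" unfolding tuples_def by auto
  moreover have "finite ({1..k} \<rightarrow>\<^sub>E {1..m})" by (rule finite_PiE) auto
  ultimately show ?thesis using finite_subset by blast
qed

lemma T_img: "s \<in> tuples k m \<Longrightarrow> s ` {1..k} \<subseteq> {1..m}"
  unfolding tuples_def by auto

lemma T_card: "s \<in> tuples k m \<Longrightarrow> card (s ` {1..k}) = k"
  unfolding tuples_def by (simp add: card_image)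

lemma Y_img: "s \<in> tuples k m \<Longrightarrow> Y k s X = (\<Prod>v\<in>s ` {1..k}. ind (X v))"
  unfolding Y_def tuples_def by (simp add: prod.reindex)

lemma prod_ind_union:
  assumes "finite A" "finite B"
  shows "(\<Prod>v\<in>A. ind (X v)) * (\<Prod>v\<in>B. ind (X v)) = (\<Prod>v\<in>A \<union> B. ind (X v))"
proof (cases "\<forall>v\<in>A \<union> B. X v")
  case True thus ?thesis by simp
next
  case False
  then obtain v where v: "v \<in> A \<union> B" "\<not> X v" by auto
  have "(\<Prod>v\<in>A \<union> B. ind (X v)) = 0" using v assms by (intro prod_zero) auto
  moreover have "(\<Prod>v\<in>A. ind (X v)) = 0 \<or> (\<Prod>v\<in>B. ind (X v)) = 0"
    using v assms by (auto intro: prod_zero)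
  ultimately show ?thesis by auto
qed

lemma EY:
  assumes "s \<in> tuples k m" "0 \<le> q" "q \<le> 1"
  shows "Exq m q (Y k s) = q ^ k"
proof -
  have "Y k s = (\<lambda>X. \<Prod>v\<in>s ` {1..k}. ind (X v))"
    using Y_img[OF assms(1)] by (intro ext) simp
  hence "Exq m q (Y k s) = Exq m q (\<lambda>X. \<Prod>v\<in>s ` {1..k}. ind (X v))" by simp
  also have "\<dots> = q ^ k" using Ex_prod_ind[OF T_img[OF assms(1)] assms(2,3)] T_card[OF assms(1)] by simp
  finally show ?thesis .
qed

lemma EYY:
  assumes "s \<in> tuples k m" "s' \<in> tuples k m" "0 \<le> q" "q \<le> 1"
  shows "Exq m q (\<lambda>X. Y k s X * Y k s' X) = q ^ card (s ` {1..k} \<union> s' ` {1..k})"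
proof -
  have "Exq m q (\<lambda>X. Y k s X * Y k s' X) = Exq m q (\<lambda>X. \<Prod>v\<in>s ` {1..k} \<union> s' ` {1..k}. ind (X v))"
    using Y_img[OF assms(1)] Y_img[OF assms(2)] by (simp add: prod_ind_union)
  also have "\<dots> = q ^ card (s ` {1..k} \<union> s' ` {1..k})" using T_img[OF assms(1)] T_img[OF assms(2)] by (intro Ex_prod_ind assms) auto
  finally show ?thesis .
qed

lemma E_HT:
  assumes "0 < q" "q \<le> 1"
  shows "Exq m q (HT_est k h m a q) = NHG k h m a"
proof -
  have "Exq m q (HT_est k h m a q) = Exq m q (\<lambda>X. \<Sum>s\<in>tuples k m. w k h a s * Y k s X / q ^ k)"
    unfolding HT_est_def THG_eq by (simp add: sum_divide_distrib)
  also have "\<dots> = (\<Sum>s\<in>tuples k m. w k h a s * Exq m q (Y k s) / q ^ k)"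
    by (subst Bochner_Integration.integral_sum) auto
  also have "\<dots> = (\<Sum>s\<in>tuples k m. w k h a s)"
    using assms by (intro sum.cong refl) (simp add: EY)
  finally show ?thesis by (simp add: NHG_eq)
qed

lemma HT_nn: "0 < q \<Longrightarrow> 0 \<le> HT_est k h m a q X"
  unfolding HT_est_def THG_eq by (auto intro!: divide_nonneg_pos sum_nonneg mult_nonneg_nonneg w_nn Y_nn)

lemma prob_Ex: "measure_pmf.prob (sampling m q) S = Exq m q (indicator S)"
  by simp

lemma Markov:
  assumes "\<And>X. 0 \<le> f X" "0 < c"
  shows "measure_pmf.prob (sampling m q) {X. c \<le> f X} \<le> Exq m q f / c"
proof -
  have "measure_pmf.prob (sampling m q) {X. c \<le> f X} = Exq m q (indicator {X. c \<le> f X})" by simp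
  also have "\<dots> \<le> Exq m q (\<lambda>X. f X / c)"
    using assms by (intro Ex_mono) (auto simp: indicator_def)
  also have "\<dots> = Exq m q f / c" by simp
  finally show ?thesis .
qed

definition Asets :: "nat \<Rightarrow> nat \<Rightarrow> nat set set" where
  "Asets k m = {A. A \<subseteq> {1..m} \<and> 1 \<le> card A \<and> card A \<le> k}"

lemma fin_Asets: "finite (Asets k m)"
proof -
  have "Asets k m \<subseteq> Pow {1..m}" unfolding Asets_def by auto
  thus ?thesis using finite_subset by (metis finite_Pow_iff finite_atLeastAtMost)
qed

lemma lc_if: "local_count k h m a A = (\<Sum>s\<in>tuples k m. if A \<subseteq> s ` {1..k} then w k h a s else 0)"
  unfolding lc_eq by (simp add: sum.inter_filter[OF fin_T, symmetric])

lemma lc_nn: "0 \<le> local_count k h m a A"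
  unfolding lc_eq by (intro sum_nonneg w_nn)

definition Good where
  "Good k h m a q \<epsilon> = {s\<in>tuples k m. \<forall>A. A \<subseteq> s ` {1..k} \<longrightarrow> A \<noteq> {} \<longrightarrow> local_count k h m a A \<le> \<epsilon> * q ^ card A * NHG k h m a}"

lemma bad_le:
  fixes \<epsilon> q :: real and k m :: nat and h a :: "nat \<Rightarrow> nat \<Rightarrow> bool"
  defines "G \<equiv> Good k h m a q \<epsilon>"
  shows "(\<Sum>s\<in>tuples k m - G. w k h a s) \<le>
     (\<Sum>A\<in>Asets k m. local_count k h m a A * (if local_count k h m a A > \<epsilon> * q ^ card A * NHG k h m a then 1 else 0))"
proof -
  let ?b = "\<lambda>A. local_count k h m a A > \<epsilon> * q ^ card A * NHG k h m a"
  have "(\<Sum>A\<in>Asets k m. local_count k h m a A * (if ?b A then 1 else 0))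
      = (\<Sum>A\<in>Asets k m. \<Sum>s\<in>tuples k m. if A \<subseteq> s ` {1..k} \<and> ?b A then w k h a s else 0)"
    unfolding lc_if by (intro sum.cong refl) (auto simp: sum_distrib_right intro!: sum.cong)
  also have "\<dots> = (\<Sum>s\<in>tuples k m. \<Sum>A\<in>Asets k m. if A \<subseteq> s ` {1..k} \<and> ?b A then w k h a s else 0)"
    by (rule sum.swap)
  also have "\<dots> \<ge> (\<Sum>s\<in>tuples k m. if s \<notin> G then w k h a s else 0)"
  proof (intro sum_mono)
    fix s assume s: "s \<in> tuples k m"
    show "(if s \<notin> G then w k h a s else 0) \<le> (\<Sum>A\<in>Asets k m. if A \<subseteq> s ` {1..k} \<and> ?b A then w k h a s else 0)"
    proof (cases "s \<in> G")
      case True thus ?thesis by (auto intro!: sum_nonneg w_nn)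
    next
      case False
      then obtain A where A: "A \<subseteq> s ` {1..k}" "A \<noteq> {}" "?b A" using s unfolding G_def Good_def by (auto simp: not_le)
      have fA: "finite A" using A(1) finite_subset by blast
      have "A \<in> Asets k m" unfolding Asets_def using A fA T_img[OF s] T_card[OF s]
        by (auto simp: Suc_le_eq card_gt_0_iff intro: card_mono[THEN order_trans])
      hence "(if A \<subseteq> s ` {1..k} \<and> ?b A then w k h a s else 0) \<le> (\<Sum>A\<in>Asets k m. if A \<subseteq> s ` {1..k} \<and> ?b A then w k h a s else 0)"
        by (intro member_le_sum fin_Asets) (auto intro: w_nn)
      thus ?thesis using A False by simp
    qed
  qed
  also have "(\<Sum>s\<in>tuples k m. if s \<notin> G then w k h a s else 0) = (\<Sum>s\<in>tuples k m - G. w k h a s)"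
    by (simp add: sum.inter_filter[OF fin_T, symmetric] set_diff_eq)
  finally show ?thesis .
qed

lemma cov_eq:
  assumes s: "s \<in> tuples k m" and s': "s' \<in> tuples k m" and q: "0 < q" "q \<le> 1"
  shows "Exq m q (\<lambda>X. (Y k s X / q ^ k - 1) * (Y k s' X / q ^ k - 1))
       = q ^ card (s ` {1..k} \<union> s' ` {1..k}) / (q ^ k)^2 - 1"
proof -
  have eq: "(\<lambda>X. (Y k s X / q ^ k - 1) * (Y k s' X / q ^ k - 1)) =
        (\<lambda>X. Y k s X * Y k s' X / (q ^ k)^2 - Y k s X / q ^ k - Y k s' X / q ^ k + 1)"
    using q by (auto simp: field_simps power2_eq_square)
  show ?thesis unfolding eq using q
    by (simp add: Bochner_Integration.integral_add Bochner_Integration.integral_diff EYY[OF s s'] EY[OF s] EY[OF s'])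
qed

lemma cov_le:
  fixes q :: real
  assumes s: "s \<in> tuples k m" and s': "s' \<in> tuples k m" and q: "0 < q" "q \<le> 1"
  shows "q ^ card (s ` {1..k} \<union> s' ` {1..k}) / (q ^ k)^2 - 1
     \<le> (if s ` {1..k} \<inter> s' ` {1..k} = {} then 0 else 1 / q ^ card (s ` {1..k} \<inter> s' ` {1..k}))"
proof -
  let ?A = "s ` {1..k}" and ?B = "s' ` {1..k}"
  have c: "card (?A \<union> ?B) + card (?A \<inter> ?B) = 2 * k"
    using card_Un_Int[of ?A ?B] T_card[OF s] T_card[OF s'] by simp
  have "q ^ card (?A \<union> ?B) * q ^ card (?A \<inter> ?B) = (q ^ k)^2"
  proof -
    have "q ^ card (?A \<union> ?B) * q ^ card (?A \<inter> ?B) = q ^ (2 * k)" by (metis power_add c)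
    also have "\<dots> = (q ^ k)^2" by (simp add: power_mult[symmetric] mult.commute)
    finally show ?thesis .
  qed
  hence e: "q ^ card (?A \<union> ?B) / (q ^ k)^2 = 1 / q ^ card (?A \<inter> ?B)"
    using q by (auto simp: field_simps)
  show ?thesis
  proof (cases "?A \<inter> ?B = {}")
    case True thus ?thesis using e by simp
  next
    case False thus ?thesis using e by simp
  qed
qed

lemma wq_nn: "0 < q \<Longrightarrow> 0 \<le> (if P then w k h a s / q ^ c else 0)"
  using w_nn[of k h a s] by auto

lemma NHG_nn: "0 \<le> NHG k h m a" unfolding NHG_eq by (intro sum_nonneg w_nn)

lemma inner_bound:
  assumes s: "s \<in> Good k h m a q \<epsilon>" and q: "0 < q" "q \<le> 1" and e: "0 \<le> \<epsilon>"
  shows "(\<Sum>s'\<in>tuples k m. w k h a s' * (if s ` {1..k} \<inter> s' ` {1..k} = {} then 0 else 1 / q ^ card (s ` {1..k} \<inter> s' ` {1..k})))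
     \<le> 2 ^ k * \<epsilon> * NHG k h m a"
proof -
  have sT: "s \<in> tuples k m" using s unfolding Good_def by auto
  let ?P = "Pow (s ` {1..k}) - {{}}"
  have finP: "finite ?P" by simp
  have "(\<Sum>s'\<in>tuples k m. w k h a s' * (if s ` {1..k} \<inter> s' ` {1..k} = {} then 0 else 1 / q ^ card (s ` {1..k} \<inter> s' ` {1..k})))
     \<le> (\<Sum>s'\<in>tuples k m. \<Sum>A\<in>?P. if A \<subseteq> s' ` {1..k} then w k h a s' / q ^ card A else 0)"
  proof (intro sum_mono)
    fix s' assume s': "s' \<in> tuples k m"
    show "w k h a s' * (if s ` {1..k} \<inter> s' ` {1..k} = {} then 0 else 1 / q ^ card (s ` {1..k} \<inter> s' ` {1..k}))
       \<le> (\<Sum>A\<in>?P. if A \<subseteq> s' ` {1..k} then w k h a s' / q ^ card A else 0)"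
    proof (cases "s ` {1..k} \<inter> s' ` {1..k} = {}")
      case True thus ?thesis using q by (auto intro!: sum_nonneg wq_nn)
    next
      case False
      hence I: "s ` {1..k} \<inter> s' ` {1..k} \<in> ?P" by auto
      have "(if s ` {1..k} \<inter> s' ` {1..k} \<subseteq> s' ` {1..k} then w k h a s' / q ^ card (s ` {1..k} \<inter> s' ` {1..k}) else 0)
         \<le> (\<Sum>A\<in>?P. if A \<subseteq> s' ` {1..k} then w k h a s' / q ^ card A else 0)"
        by (rule member_le_sum[OF I _ finP]) (use q in \<open>auto intro!: divide_nonneg_pos w_nn\<close>)
      thus ?thesis using False by simp
    qed
  qed
  also have "\<dots> = (\<Sum>A\<in>?P. \<Sum>s'\<in>tuples k m. if A \<subseteq> s' ` {1..k} then w k h a s' / q ^ card A else 0)"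
    by (rule sum.swap)
  also have "\<dots> = (\<Sum>A\<in>?P. local_count k h m a A / q ^ card A)"
    unfolding lc_if by (intro sum.cong refl) (auto simp: sum_divide_distrib intro!: sum.cong split: if_splits)
  also have "\<dots> \<le> (\<Sum>A\<in>?P. \<epsilon> * NHG k h m a)"
  proof (intro sum_mono)
    fix A assume A: "A \<in> ?P"
    hence "local_count k h m a A \<le> \<epsilon> * q ^ card A * NHG k h m a" using s unfolding Good_def by auto
    thus "local_count k h m a A / q ^ card A \<le> \<epsilon> * NHG k h m a" using q by (simp add: divide_le_eq mult_ac)
  qed
  also have "\<dots> = real (card ?P) * (\<epsilon> * NHG k h m a)" by simp
  also have "\<dots> \<le> 2 ^ k * (\<epsilon> * NHG k h m a)"
  proof (intro mult_right_mono)
    have "card ?P \<le> card (Pow (s ` {1..k}))" by (intro card_mono) auto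
    also have "\<dots> = 2 ^ k" using T_card[OF sT] by (simp add: card_Pow)
    finally show "real (card ?P) \<le> 2 ^ k" by (metis of_nat_le_iff of_nat_numeral of_nat_power)
    show "0 \<le> \<epsilon> * NHG k h m a" using e NHG_nn by simp
  qed
  finally show ?thesis by (simp add: mult_ac)
qed

lemma Good_sub: "Good k h m a q \<epsilon> \<subseteq> tuples k m" unfolding Good_def by auto
lemma fin_Good: "finite (Good k h m a q \<epsilon>)" using finite_subset[OF Good_sub fin_T] .

lemma var_bound:
  fixes q \<epsilon> :: real
  assumes q: "0 < q" "q \<le> 1" and e: "0 \<le> \<epsilon>"
  shows "Exq m q (\<lambda>X. ((\<Sum>s\<in>Good k h m a q \<epsilon>. w k h a s * Y k s X / q ^ k) - (\<Sum>s\<in>Good k h m a q \<epsilon>. w k h a s))^2)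
     \<le> 2 ^ k * \<epsilon> * (NHG k h m a)^2"
proof -
  let ?G = "Good k h m a q \<epsilon>"
  let ?f = "\<lambda>s X. Y k s X / q ^ k - 1"
  have sq: "(\<lambda>X. ((\<Sum>s\<in>?G. w k h a s * Y k s X / q ^ k) - (\<Sum>s\<in>?G. w k h a s))^2)
      = (\<lambda>X. \<Sum>s\<in>?G. \<Sum>s'\<in>?G. (w k h a s * w k h a s') * (?f s X * ?f s' X))"
  proof
    fix X
    have "(\<Sum>s\<in>?G. w k h a s * Y k s X / q ^ k) - (\<Sum>s\<in>?G. w k h a s) = (\<Sum>s\<in>?G. w k h a s * ?f s X)"
      by (simp add: sum_subtractf algebra_simps)
    thus "((\<Sum>s\<in>?G. w k h a s * Y k s X / q ^ k) - (\<Sum>s\<in>?G. w k h a s))^2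
      = (\<Sum>s\<in>?G. \<Sum>s'\<in>?G. (w k h a s * w k h a s') * (?f s X * ?f s' X))"
      by (simp add: power2_eq_square sum_product mult_ac)
  qed
  have "Exq m q (\<lambda>X. \<Sum>s\<in>?G. \<Sum>s'\<in>?G. (w k h a s * w k h a s') * (?f s X * ?f s' X))
      = (\<Sum>s\<in>?G. \<Sum>s'\<in>?G. (w k h a s * w k h a s') * Exq m q (\<lambda>X. ?f s X * ?f s' X))"
    by (simp add: Bochner_Integration.integral_sum)
  also have "\<dots> \<le> (\<Sum>s\<in>?G. \<Sum>s'\<in>tuples k m. (w k h a s * w k h a s') *
       (if s ` {1..k} \<inter> s' ` {1..k} = {} then 0 else 1 / q ^ card (s ` {1..k} \<inter> s' ` {1..k})))"
  proof (intro sum_mono)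
    fix s assume s: "s \<in> ?G"
    hence sT: "s \<in> tuples k m" using Good_sub by blast
    have "(\<Sum>s'\<in>?G. (w k h a s * w k h a s') * Exq m q (\<lambda>X. ?f s X * ?f s' X))
       \<le> (\<Sum>s'\<in>?G. (w k h a s * w k h a s') *
       (if s ` {1..k} \<inter> s' ` {1..k} = {} then 0 else 1 / q ^ card (s ` {1..k} \<inter> s' ` {1..k})))"
    proof (intro sum_mono mult_left_mono)
      fix s' assume "s' \<in> ?G"
      hence s'T: "s' \<in> tuples k m" using Good_sub by blast
      show "Exq m q (\<lambda>X. ?f s X * ?f s' X) \<le> (if s ` {1..k} \<inter> s' ` {1..k} = {} then 0 else 1 / q ^ card (s ` {1..k} \<inter> s' ` {1..k}))"
        using cov_eq[OF sT s'T q] cov_le[OF sT s'T q] by simp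
      show "0 \<le> w k h a s * w k h a s'" by (intro mult_nonneg_nonneg w_nn)
    qed
    also have "\<dots> \<le> (\<Sum>s'\<in>tuples k m. (w k h a s * w k h a s') *
       (if s ` {1..k} \<inter> s' ` {1..k} = {} then 0 else 1 / q ^ card (s ` {1..k} \<inter> s' ` {1..k})))"
      by (intro sum_mono2 fin_T Good_sub) (use q in \<open>auto intro!: mult_nonneg_nonneg divide_nonneg_pos w_nn\<close>)
    finally show "(\<Sum>s'\<in>?G. (w k h a s * w k h a s') * Exq m q (\<lambda>X. ?f s X * ?f s' X))
       \<le> (\<Sum>s'\<in>tuples k m. (w k h a s * w k h a s') *
       (if s ` {1..k} \<inter> s' ` {1..k} = {} then 0 else 1 / q ^ card (s ` {1..k} \<inter> s' ` {1..k})))" .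
  qed
  also have "\<dots> = (\<Sum>s\<in>?G. w k h a s * (\<Sum>s'\<in>tuples k m. w k h a s' *
       (if s ` {1..k} \<inter> s' ` {1..k} = {} then 0 else 1 / q ^ card (s ` {1..k} \<inter> s' ` {1..k}))))"
    by (simp add: sum_distrib_left mult_ac)
  also have "\<dots> \<le> (\<Sum>s\<in>?G. w k h a s * (2 ^ k * \<epsilon> * NHG k h m a))"
    by (intro sum_mono mult_left_mono inner_bound q e w_nn)
  also have "\<dots> = (\<Sum>s\<in>?G. w k h a s) * (2 ^ k * \<epsilon> * NHG k h m a)"
    by (simp add: sum_distrib_right)
  also have "\<dots> \<le> NHG k h m a * (2 ^ k * \<epsilon> * NHG k h m a)"
  proof (intro mult_right_mono)
    show "(\<Sum>s\<in>?G. w k h a s) \<le> NHG k h m a" unfolding NHG_eq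
      by (intro sum_mono2 fin_T Good_sub w_nn)
    show "0 \<le> 2 ^ k * \<epsilon> * NHG k h m a" using e NHG_nn by simp
  qed
  finally show ?thesis unfolding sq by (simp add: power2_eq_square mult_ac)
qed

lemma Ex_sumY:
  assumes "S \<subseteq> tuples k m" "0 < q" "q \<le> 1"
  shows "Exq m q (\<lambda>X. \<Sum>s\<in>S. w k h a s * Y k s X / q ^ k) = (\<Sum>s\<in>S. w k h a s)"
proof -
  have "Exq m q (\<lambda>X. \<Sum>s\<in>S. w k h a s * Y k s X / q ^ k) = (\<Sum>s\<in>S. w k h a s * Exq m q (Y k s) / q ^ k)"
    by (simp add: Bochner_Integration.integral_sum)
  also have "\<dots> = (\<Sum>s\<in>S. w k h a s)" using assms by (intro sum.cong refl) (auto simp: EY)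
  finally show ?thesis .
qed

lemma suff_bound:
  fixes q \<epsilon> \<delta> :: real
  assumes q: "0 < q" "q \<le> 1" and N: "0 < NHG k h m a" and e: "0 < \<epsilon>" and d: "0 < \<delta>"
  shows "measure_pmf.prob (sampling m q) {X. \<bar>HT_est k h m a q X / NHG k h m a - 1\<bar> > \<delta>}
    \<le> 16 * 2 ^ k * \<epsilon> / \<delta>^2 + 4 / \<delta> * ((1 / NHG k h m a) *
        (\<Sum>A\<in>Asets k m. local_count k h m a A * (if local_count k h m a A > \<epsilon> * q ^ card A * NHG k h m a then 1 else 0)))"
proof -
  define NN where "NN = NHG k h m a"
  define G where "G = Good k h m a q \<epsilon>"
  define T where "T = tuples k m"
  define U where "U = (\<lambda>X. \<Sum>s\<in>G. w k h a s * Y k s X / q ^ k)"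
  define V where "V = (\<lambda>X. \<Sum>s\<in>T - G. w k h a s * Y k s X / q ^ k)"
  define \<mu> where "\<mu> = (\<Sum>s\<in>G. w k h a s)"
  define Nb where "Nb = (\<Sum>s\<in>T - G. w k h a s)"
  define \<Phi> where "\<Phi> = (\<Sum>A\<in>Asets k m. local_count k h m a A * (if local_count k h m a A > \<epsilon> * q ^ card A * NHG k h m a then 1 else 0))"
  define S where "S = {X. \<bar>HT_est k h m a q X / NHG k h m a - 1\<bar> > \<delta>}"
  have GT: "G \<subseteq> T" unfolding G_def T_def by (rule Good_sub)
  have finT: "finite T" unfolding T_def by (rule fin_T)
  have Nb_le: "Nb \<le> \<Phi>" unfolding Nb_def \<Phi>_def T_def G_def by (rule bad_le)
  have HT_eq: "HT_est k h m a q X = U X + V X" for X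
    unfolding HT_est_def THG_eq U_def V_def T_def[symmetric]
    by (simp add: sum.subset_diff[OF GT finT] add_divide_distrib sum_divide_distrib)
  have N_eq: "NN = \<mu> + Nb"
    unfolding NN_def NHG_eq \<mu>_def Nb_def T_def[symmetric] by (simp add: sum.subset_diff[OF GT finT])
  have V_nn: "0 \<le> V X" for X unfolding V_def using q
    by (auto intro!: sum_nonneg divide_nonneg_pos mult_nonneg_nonneg w_nn Y_nn)
  have Nb_nn: "0 \<le> Nb" unfolding Nb_def by (intro sum_nonneg w_nn)
  have prob_le1: "measure_pmf.prob (sampling m q) S \<le> 1" by simp
  have rhs_nn: "0 \<le> 16 * 2 ^ k * \<epsilon> / \<delta>^2" using e d by simp
  have PhiN: "4 / \<delta> * ((1 / NN) * \<Phi>) = 4 * \<Phi> / (\<delta> * NN)" using N d unfolding NN_def by simp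
  show ?thesis
  proof (cases "Nb \<le> \<delta> * NN / 4")
    case False
    hence "\<delta> * NN / 4 < \<Phi>" using Nb_le by simp
    hence "1 < 4 * \<Phi> / (\<delta> * NN)" using d N unfolding NN_def by (simp add: field_simps)
    thus ?thesis using prob_le1 rhs_nn PhiN unfolding S_def NN_def \<Phi>_def by linarith
  next
    case True
    define E1 where "E1 = {X. (\<delta> * NN / 4)^2 \<le> (U X - \<mu>)^2}"
    define E2 where "E2 = {X. \<delta> * NN / 2 \<le> V X}"
    have dN: "0 < \<delta> * NN" using d N unfolding NN_def by simp
    have sub: "S \<subseteq> E1 \<union> E2"
    proof
      fix X assume X: "X \<in> S"
      show "X \<in> E1 \<union> E2"
      proof (rule ccontr)
        assume "X \<notin> E1 \<union> E2"
        hence a1: "(U X - \<mu>)^2 < (\<delta> * NN / 4)^2" and a2: "V X < \<delta> * NN / 2"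
          unfolding E1_def E2_def by auto
        have "\<bar>U X - \<mu>\<bar> < \<delta> * NN / 4"
          using a1 dN by (metis abs_le_square_iff abs_of_pos divide_pos_pos linorder_not_less zero_less_numeral)
        moreover have "\<bar>V X - Nb\<bar> < \<delta> * NN / 2" using a2 V_nn[of X] Nb_nn True dN by linarith
        ultimately have "\<bar>HT_est k h m a q X - NN\<bar> < \<delta> * NN"
          unfolding HT_eq N_eq by linarith
        hence "\<bar>HT_est k h m a q X - NN\<bar> / NN < \<delta>" using N unfolding NN_def by (simp add: divide_less_eq)
        moreover have "\<bar>HT_est k h m a q X / NN - 1\<bar> = \<bar>HT_est k h m a q X - NN\<bar> / NN"
          using N unfolding NN_def by (simp add: field_simps abs_divide)
        ultimately show False using X unfolding S_def NN_def by simp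
      qed
    qed
    have "measure_pmf.prob (sampling m q) S \<le> measure_pmf.prob (sampling m q) (E1 \<union> E2)"
      by (rule measure_pmf.finite_measure_mono[OF sub]) simp
    also have "\<dots> \<le> measure_pmf.prob (sampling m q) E1 + measure_pmf.prob (sampling m q) E2"
      by (rule measure_Un_le) simp_all
    also have "measure_pmf.prob (sampling m q) E1 \<le> Exq m q (\<lambda>X. (U X - \<mu>)^2) / (\<delta> * NN / 4)^2"
      unfolding E1_def by (rule Markov) (use dN in auto)
    also have "\<dots> \<le> (2 ^ k * \<epsilon> * NN^2) / (\<delta> * NN / 4)^2"
      unfolding U_def \<mu>_def G_def NN_def
      by (intro divide_right_mono var_bound q) (use e in auto)
    also have "\<dots> = 16 * 2 ^ k * \<epsilon> / \<delta>^2" using dN N unfolding NN_def by (simp add: field_simps power2_eq_square)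
    also have "measure_pmf.prob (sampling m q) E2 \<le> Exq m q V / (\<delta> * NN / 2)"
      unfolding E2_def by (rule Markov) (use dN V_nn in auto)
    also have "Exq m q V = Nb" unfolding V_def Nb_def using GT q T_def by (intro Ex_sumY) auto
    also have "Nb / (\<delta> * NN / 2) \<le> 4 * \<Phi> / (\<delta> * NN)"
      using Nb_le Nb_nn dN by (simp add: field_simps)
    finally show ?thesis using PhiN unfolding S_def NN_def \<Phi>_def by simp
  qed
qed

definition EF :: "nat set set \<Rightarrow> (nat \<Rightarrow> bool) set" where
  "EF F = {X. \<exists>A\<in>F. \<forall>v\<in>A. X v}"

definition NF where
  "NF k h m a F = (\<Sum>s\<in>{s\<in>tuples k m. \<exists>A\<in>F. A \<subseteq> s ` {1..k}}. w k h a s)"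

lemma NF_if: "NF k h m a F = (\<Sum>s\<in>tuples k m. if (\<exists>A\<in>F. A \<subseteq> s ` {1..k}) then w k h a s else 0)"
  unfolding NF_def by (simp add: sum.inter_filter[OF fin_T, symmetric])

lemma NF_nn: "0 \<le> NF k h m a F" unfolding NF_def by (intro sum_nonneg w_nn)

lemma NF_le: "NF k h m a F \<le> NHG k h m a"
  unfolding NF_def NHG_eq by (intro sum_mono2 fin_T w_nn) auto

lemma U_bound:
  fixes q \<delta> :: real
  assumes q: "0 < q" "q \<le> 1" and N: "0 < NHG k h m a" and d: "0 < \<delta>"
  shows "Exq m q (\<lambda>X. (HT_est k h m a q X - NHG k h m a) * indicator S X)
     \<le> NHG k h m a * (\<delta> + measure_pmf.prob (sampling m q) {X. \<bar>HT_est k h m a q X / NHG k h m a - 1\<bar> > \<delta>})"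
proof -
  let ?N = "NHG k h m a" and ?H = "HT_est k h m a q"
  let ?D = "{X. \<bar>?H X / ?N - 1\<bar> > \<delta>}"
  have eq: "(\<lambda>X. (?H X - ?N) * indicator S X) = (\<lambda>X. (?H X - ?N) + (?N - ?H X) * indicator (- S) X)"
    by (auto simp: indicator_def fun_eq_iff)
  have pw: "(?N - ?H X) * indicator (- S) X \<le> ?N * \<delta> + ?N * indicator ?D X" for X
  proof (cases "X \<in> ?D")
    case True
    have "0 \<le> HT_est k h m a q X" by (rule HT_nn[OF q(1)])
    moreover have "0 < ?N * \<delta>" using N d by simp
    ultimately show ?thesis using True N unfolding indicator_def by (cases "X \<in> S") simp_all
  next
    case False
    hence "\<bar>?H X / ?N - 1\<bar> \<le> \<delta>" by auto
    hence "\<bar>?H X - ?N\<bar> \<le> \<delta> * ?N" using N by (simp add: field_simps abs_divide divide_le_eq)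
    thus ?thesis using False N d by (auto simp: indicator_def algebra_simps)
  qed
  have e1: "Exq m q (\<lambda>X. (?H X - ?N) * indicator S X) = Exq m q (\<lambda>X. ?H X - ?N) + Exq m q (\<lambda>X. (?N - ?H X) * indicator (- S) X)"
    unfolding eq by (rule Bochner_Integration.integral_add) auto
  have e2: "Exq m q (\<lambda>X. ?H X - ?N) = 0" using E_HT[OF q] by (simp add: Bochner_Integration.integral_diff)
  have e3: "Exq m q (\<lambda>X. (?N - ?H X) * indicator (- S) X) \<le> Exq m q (\<lambda>X. ?N * \<delta> + ?N * indicator ?D X)"
    by (rule Ex_mono) (rule pw)
  have e4: "Exq m q (\<lambda>X. ?N * \<delta> + ?N * indicator ?D X) = ?N * \<delta> + ?N * measure_pmf.prob (sampling m q) ?D"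
    by (simp add: Bochner_Integration.integral_add)
  show ?thesis using e1 e2 e3 e4 by (simp add: algebra_simps)
qed

lemma EF_mono: "X \<in> EF F \<Longrightarrow> (\<And>v. X v \<Longrightarrow> Z v) \<Longrightarrow> Z \<in> EF F"
  unfolding EF_def by blast

lemma L_lower:
  fixes q :: real
  assumes q: "0 < q" "q \<le> 1"
  shows "NF k h m a F * (1 - measure_pmf.prob (sampling m q) (EF F))
     \<le> Exq m q (\<lambda>X. (HT_est k h m a q X - NHG k h m a) * indicator (EF F) X)"
proof -
  let ?P = "measure_pmf.prob (sampling m q) (EF F)"
  let ?c = "\<lambda>s. \<exists>A\<in>F. A \<subseteq> s ` {1..k}"
  have HTi: "(\<lambda>X. (HT_est k h m a q X - NHG k h m a) * indicator (EF F) X)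
     = (\<lambda>X. (\<Sum>s\<in>tuples k m. w k h a s * (Y k s X * indicator (EF F) X) / q ^ k) - NHG k h m a * indicator (EF F) X)"
  proof
    fix X
    have "THG k h m a X / q ^ k * indicator (EF F) X = (\<Sum>s\<in>tuples k m. w k h a s * (Y k s X * indicator (EF F) X) / q ^ k)"
      unfolding THG_eq sum_divide_distrib sum_distrib_right by (intro sum.cong refl) simp
    thus "(HT_est k h m a q X - NHG k h m a) * indicator (EF F) X = (\<Sum>s\<in>tuples k m. w k h a s * (Y k s X * indicator (EF F) X) / q ^ k) - NHG k h m a * indicator (EF F) X"
      unfolding HT_est_def by (simp add: algebra_simps)
  qed
  have c1: "Exq m q (\<lambda>X. (HT_est k h m a q X - NHG k h m a) * indicator (EF F) X)
      = (\<Sum>s\<in>tuples k m. w k h a s * Exq m q (\<lambda>X. Y k s X * indicator (EF F) X) / q ^ k) - NHG k h m a * ?P"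
    unfolding HTi by (simp add: Bochner_Integration.integral_diff Bochner_Integration.integral_sum)
  have c2: "(\<Sum>s\<in>tuples k m. w k h a s * Exq m q (\<lambda>X. Y k s X * indicator (EF F) X) / q ^ k) - NHG k h m a * ?P = (\<Sum>s\<in>tuples k m. w k h a s * (Exq m q (\<lambda>X. Y k s X * indicator (EF F) X) / q ^ k - ?P))"
  proof -
    have s1: "(\<Sum>s\<in>tuples k m. w k h a s * ?P) = NHG k h m a * ?P"
      unfolding NHG_eq by (rule sum_distrib_right[symmetric])
    have s2: "(\<Sum>s\<in>tuples k m. w k h a s * (Exq m q (\<lambda>X. Y k s X * indicator (EF F) X) / q ^ k - ?P))
       = (\<Sum>s\<in>tuples k m. w k h a s * Exq m q (\<lambda>X. Y k s X * indicator (EF F) X) / q ^ k) - (\<Sum>s\<in>tuples k m. w k h a s * ?P)"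
      by (simp only: right_diff_distrib sum_subtractf times_divide_eq_right)
    show ?thesis using s1 s2 by linarith
  qed
  have c3: "(\<Sum>s\<in>tuples k m. if ?c s then w k h a s * (1 - ?P) else 0) \<le> (\<Sum>s\<in>tuples k m. w k h a s * (Exq m q (\<lambda>X. Y k s X * indicator (EF F) X) / q ^ k - ?P))"
  proof (intro sum_mono)
    fix s assume s: "s \<in> tuples k m"
    have Yi: "Y k s = (\<lambda>X. \<Prod>v\<in>s ` {1..k}. ind (X v))" using Y_img[OF s] by (intro ext) simp
    show "(if ?c s then w k h a s * (1 - ?P) else 0) \<le> w k h a s * (Exq m q (\<lambda>X. Y k s X * indicator (EF F) X) / q ^ k - ?P)"
    proof (cases "?c s")
      case True
      then obtain A where A: "A \<in> F" "A \<subseteq> s ` {1..k}" by auto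
      have "(\<lambda>X. Y k s X * indicator (EF F) X) = Y k s"
      proof
        fix X
        show "Y k s X * indicator (EF F) X = Y k s X"
        proof (cases "\<forall>v\<in>s ` {1..k}. X v")
          case True
          hence "\<forall>v\<in>A. X v" using A(2) by blast
          hence "X \<in> EF F" unfolding EF_def mem_Collect_eq using A(1) by blast
          thus ?thesis by simp
        next
          case False
          hence "Y k s X = 0" unfolding Yi by (auto intro: prod_zero)
          thus ?thesis by simp
        qed
      qed
      hence E1: "Exq m q (\<lambda>X. Y k s X * indicator (EF F) X) / q ^ k = 1" using EY[OF s] q by simp
      have "w k h a s * (Exq m q (\<lambda>X. Y k s X * indicator (EF F) X) / q ^ k - ?P) = w k h a s * (1 - ?P)"
        by (simp only: E1)
      thus ?thesis unfolding if_P[OF True] by (rule eq_refl[OF sym])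
    next
      case False
      have gm: "indicator (EF F) X \<le> (indicator (EF F) Z :: real)" if XZ: "\<And>v. X v \<Longrightarrow> Z v" for X Z
      proof (cases "X \<in> EF F")
        case True
        hence "Z \<in> EF F" using EF_mono XZ by blast
        thus ?thesis using True by simp
      qed simp
      have Ts: "s ` {1..k} \<subseteq> {1..m}" using s T_img by blast
      have gn: "0 \<le> (indicator (EF F) X :: real)" for X by simp
      have "q ^ card (s ` {1..k}) * Exq m q (indicator (EF F)) \<le> Exq m q (\<lambda>X. (\<Prod>v\<in>s ` {1..k}. ind (X v)) * indicator (EF F) X)"
        by (rule Ex_prod_ind_mono[OF Ts]) (use q gm gn in auto)
      hence "q ^ k * Exq m q (indicator (EF F)) \<le> Exq m q (\<lambda>X. Y k s X * indicator (EF F) X)"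
        unfolding Yi T_card[OF s] .
      hence "?P \<le> Exq m q (\<lambda>X. Y k s X * indicator (EF F) X) / q ^ k" using q by (simp add: field_simps)
      thus ?thesis using False w_nn[of k h a s] by simp
    qed
  qed
  have c4: "(\<Sum>s\<in>tuples k m. if ?c s then w k h a s * (1 - ?P) else 0) = NF k h m a F * (1 - ?P)"
    unfolding NF_if sum_distrib_right by (intro sum.cong refl) simp
  show ?thesis using c1 c2 c3 c4 by linarith
qed

lemma P_union:
  fixes q :: real
  assumes q: "0 \<le> q" "q \<le> 1" and F: "\<And>A. A \<in> F \<Longrightarrow> A \<subseteq> {1..m}" and finF: "finite F"
  shows "measure_pmf.prob (sampling m q) (EF F) \<le> (\<Sum>A\<in>F. q ^ card A)"
proof -
  have "measure_pmf.prob (sampling m q) (EF F) = Exq m q (indicator (EF F))" by simp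
  also have "\<dots> \<le> Exq m q (\<lambda>X. \<Sum>A\<in>F. \<Prod>v\<in>A. ind (X v))"
  proof (rule Ex_mono)
    fix X
    show "indicator (EF F) X \<le> (\<Sum>A\<in>F. \<Prod>v\<in>A. ind (X v))"
    proof (cases "X \<in> EF F")
      case True
      then obtain A where A: "A \<in> F" "\<forall>v\<in>A. X v" unfolding EF_def by auto
      have "(\<Prod>v\<in>A. ind (X v)) \<le> (\<Sum>A\<in>F. \<Prod>v\<in>A. ind (X v))"
        by (rule member_le_sum[OF A(1) _ finF]) (auto intro: prod_nonneg)
      thus ?thesis using A True by simp
    next
      case False thus ?thesis by (auto intro!: sum_nonneg prod_nonneg)
    qed
  qed
  also have "\<dots> = (\<Sum>A\<in>F. q ^ card A)"
    by (simp add: Bochner_Integration.integral_sum Ex_prod_ind[OF F q])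
  finally show ?thesis .
qed

lemma sum_t_le:
  assumes finF: "finite F"
  shows "(\<Sum>A\<in>F. local_count k h m a A) \<le> 2 ^ k * NF k h m a F"
proof -
  have "(\<Sum>A\<in>F. local_count k h m a A) = (\<Sum>s\<in>tuples k m. \<Sum>A\<in>F. if A \<subseteq> s ` {1..k} then w k h a s else 0)"
    unfolding lc_if by (rule sum.swap)
  also have "\<dots> \<le> (\<Sum>s\<in>tuples k m. 2 ^ k * (if (\<exists>A\<in>F. A \<subseteq> s ` {1..k}) then w k h a s else 0))"
  proof (intro sum_mono)
    fix s assume s: "s \<in> tuples k m"
    show "(\<Sum>A\<in>F. if A \<subseteq> s ` {1..k} then w k h a s else 0) \<le> 2 ^ k * (if (\<exists>A\<in>F. A \<subseteq> s ` {1..k}) then w k h a s else 0)"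
    proof (cases "\<exists>A\<in>F. A \<subseteq> s ` {1..k}")
      case False thus ?thesis by (auto intro: sum.neutral)
    next
      case True
      have "(\<Sum>A\<in>F. if A \<subseteq> s ` {1..k} then w k h a s else 0) = (\<Sum>A\<in>{A\<in>F. A \<subseteq> s ` {1..k}}. w k h a s)"
        by (rule sum.inter_filter[OF finF, symmetric])
      also have "\<dots> = real (card {A\<in>F. A \<subseteq> s ` {1..k}}) * w k h a s" by simp
      also have "\<dots> \<le> 2 ^ k * w k h a s"
      proof (intro mult_right_mono w_nn)
        have "card {A\<in>F. A \<subseteq> s ` {1..k}} \<le> card (Pow (s ` {1..k}))" by (intro card_mono) auto
        also have "\<dots> = 2 ^ k" using T_card[OF s] by (simp add: card_Pow)
        finally show "real (card {A\<in>F. A \<subseteq> s ` {1..k}}) \<le> 2 ^ k"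
          by (metis of_nat_le_iff of_nat_numeral of_nat_power)
      qed
      finally show ?thesis using True by simp
    qed
  qed
  also have "\<dots> = 2 ^ k * NF k h m a F" unfolding NF_if by (simp add: sum_distrib_left)
  finally show ?thesis .
qed

lemma extract_sub:
  fixes wt :: "'a \<Rightarrow> real"
  assumes "finite B" "\<forall>x\<in>B. 0 \<le> wt x \<and> wt x \<le> 1/4" "1/4 \<le> sum wt B"
  shows "\<exists>F\<subseteq>B. 1/4 \<le> sum wt F \<and> sum wt F \<le> 1/2"
  using assms
proof (induction B rule: finite_induct)
  case empty thus ?case by simp
next
  case (insert x B)
  show ?case
  proof (cases "1/4 \<le> sum wt B")
    case True
    then obtain F where "F \<subseteq> B" "1/4 \<le> sum wt F" "sum wt F \<le> 1/2" using insert by auto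
    thus ?thesis by blast
  next
    case False
    have "sum wt (insert x B) = wt x + sum wt B" using insert by simp
    moreover have "wt x \<le> 1/4" using insert.prems by simp
    ultimately have "sum wt (insert x B) \<le> 1/2" using False by linarith
    thus ?thesis using insert.prems(2) by blast
  qed
qed

lemma partition_bound:
  fixes wt \<tau> :: "'a \<Rightarrow> real"
  assumes "finite B" "\<forall>x\<in>B. 0 \<le> wt x \<and> wt x \<le> 1/4" "\<forall>x\<in>B. 0 \<le> \<tau> x"
    "\<forall>F. F \<subseteq> B \<longrightarrow> sum wt F \<le> 1/2 \<longrightarrow> sum \<tau> F \<le> M" "0 \<le> M"
  shows "sum \<tau> B \<le> (4 * sum wt B + 1) * M"
  using assms
proof (induction "card B" arbitrary: B rule: less_induct)
  case less
  have swn: "0 \<le> sum wt B" using less.prems(2) by (auto intro: sum_nonneg)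
  show ?case
  proof (cases "sum wt B \<le> 1/2")
    case True
    hence "sum \<tau> B \<le> M" using less.prems(4) by blast
    moreover have "0 \<le> 4 * sum wt B * M" using swn less.prems(5) by simp
    ultimately show ?thesis by (simp add: algebra_simps)
  next
    case False
    obtain F where F: "F \<subseteq> B" "1/4 \<le> sum wt F" "sum wt F \<le> 1/2"
      using extract_sub[of B wt] less.prems False by auto
    have Fne: "F \<noteq> {}" using F(2) by auto
    have finF: "finite F" using F(1) less.prems(1) finite_subset by blast
    have ps: "B - F \<subset> B" using F(1) Fne by blast
    have lt: "card (B - F) < card B" by (rule psubset_card_mono[OF less.prems(1) ps])
    have IH: "sum \<tau> (B - F) \<le> (4 * sum wt (B - F) + 1) * M"
      by (rule less.hyps[OF lt]) (use less.prems in auto)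
    have sw: "sum wt (B - F) = sum wt B - sum wt F" by (rule sum_diff[OF less.prems(1) F(1)])
    have st: "sum \<tau> B = sum \<tau> (B - F) + sum \<tau> F" using sum.subset_diff[OF F(1) less.prems(1)] .
    have sF: "sum \<tau> F \<le> M" using less.prems(4) F by blast
    have "M \<le> 4 * sum wt F * M" using F(2) less.prems(5)
      by (metis mult_right_mono mult_1 mult.assoc divide_le_eq_numeral1(1) mult.commute times_divide_eq_left)
    thus ?thesis using IH sw st sF by (simp add: algebra_simps)
  qed
qed

lemma Asets_sub: "A \<in> Asets k m \<Longrightarrow> A \<subseteq> {1..m}" unfolding Asets_def by auto
lemma Asets_card: "A \<in> Asets k m \<Longrightarrow> 1 \<le> card A" unfolding Asets_def by auto

lemma NF_single: "NF k h m a {A} = local_count k h m a A"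
  unfolding NF_def lc_eq by simp

lemma pow_le_base: "0 \<le> (q::real) \<Longrightarrow> q \<le> 1 \<Longrightarrow> 1 \<le> n \<Longrightarrow> q ^ n \<le> q"
  by (metis One_nat_def power_decreasing power_one_right)

lemma nec_bound:
  fixes q q0 \<epsilon> \<delta> :: real
  assumes q: "0 < q" "q \<le> q0" "q0 < 1" and N: "0 < NHG k h m a" and e: "0 < \<epsilon>" and d: "0 < \<delta>"
    and D: "\<delta> + measure_pmf.prob (sampling m q) {X. \<bar>HT_est k h m a q X / NHG k h m a - 1\<bar> > \<delta>} \<le> (1 - q0) * \<epsilon> / 4"
  shows "(1 / NHG k h m a) * (\<Sum>A\<in>Asets k m. local_count k h m a A *
            (if local_count k h m a A > \<epsilon> * q ^ card A * NHG k h m a then 1 else 0))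
       \<le> (4 * 2 ^ k / \<epsilon> + 1) * 2 ^ (k + 1) *
          (\<delta> + measure_pmf.prob (sampling m q) {X. \<bar>HT_est k h m a q X / NHG k h m a - 1\<bar> > \<delta>})"
proof -
  define NN where "NN = NHG k h m a"
  define DD where "DD = \<delta> + measure_pmf.prob (sampling m q) {X. \<bar>HT_est k h m a q X / NHG k h m a - 1\<bar> > \<delta>}"
  define t where "t = local_count k h m a"
  define Bad where "Bad = {A \<in> Asets k m. t A > \<epsilon> * q ^ card A * NN}"
  have q1: "q \<le> 1" using q by simp
  have DD_nn: "0 \<le> DD" unfolding DD_def using d by simp
  have NN_pos: "0 < NN" unfolding NN_def by (rule N)
  have t_nn: "0 \<le> t A" for A unfolding t_def by (rule lc_nn)
  have finBad: "finite Bad" unfolding Bad_def using fin_Asets by simp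
  have Bad_sub: "Bad \<subseteq> Asets k m" unfolding Bad_def by auto
  have Phi_eq: "(\<Sum>A\<in>Asets k m. t A * (if t A > \<epsilon> * q ^ card A * NN then 1 else 0)) = sum t Bad"
    unfolding Bad_def by (simp add: sum.inter_filter[OF fin_Asets] if_distrib cong: if_cong)
  have fam: "NF k h m a F * (1 - measure_pmf.prob (sampling m q) (EF F)) \<le> NN * DD" for F
  proof -
    have "NF k h m a F * (1 - measure_pmf.prob (sampling m q) (EF F))
       \<le> Exq m q (\<lambda>X. (HT_est k h m a q X - NHG k h m a) * indicator (EF F) X)"
      by (rule L_lower) (use q in auto)
    also have "\<dots> \<le> NN * DD" unfolding NN_def DD_def by (rule U_bound) (use q N d in auto)
    finally show ?thesis .
  qed
  have single: "t A * (1 - q0) \<le> NN * DD" if A: "A \<in> Asets k m" for A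
  proof -
    have "measure_pmf.prob (sampling m q) (EF {A}) \<le> (\<Sum>A\<in>{A}. q ^ card A)"
      by (rule P_union) (use q Asets_sub[OF A] in auto)
    also have "\<dots> = q ^ card A" by simp
    also have "\<dots> \<le> q" by (rule pow_le_base) (use q Asets_card[OF A] in auto)
    finally have "measure_pmf.prob (sampling m q) (EF {A}) \<le> q0" using q by simp
    hence "t A * (1 - q0) \<le> t A * (1 - measure_pmf.prob (sampling m q) (EF {A}))"
      using t_nn[of A] by (intro mult_left_mono) auto
    also have "\<dots> \<le> NN * DD" using fam[of "{A}"] unfolding NF_single t_def .
    finally show ?thesis .
  qed
  have wt_small: "q ^ card A \<le> 1/4" if A: "A \<in> Bad" for A
  proof -
    have AA: "A \<in> Asets k m" and b: "\<epsilon> * q ^ card A * NN < t A" using A unfolding Bad_def by auto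
    have "t A \<le> NN * DD / (1 - q0)" using single[OF AA] q by (simp add: field_simps)
    also have "\<dots> \<le> NN * ((1 - q0) * \<epsilon> / 4) / (1 - q0)"
      using D NN_pos q unfolding DD_def by (intro divide_right_mono mult_left_mono) auto
    also have "\<dots> = NN * \<epsilon> / 4" using q by (simp add: field_simps)
    finally have "\<epsilon> * q ^ card A * NN < NN * \<epsilon> / 4" using b by linarith
    hence "q ^ card A * (\<epsilon> * NN) < (1/4) * (\<epsilon> * NN)" by (simp add: algebra_simps)
    thus ?thesis using e NN_pos by (simp add: mult_less_cancel_right)
  qed
  have wt_le_t: "q ^ card A \<le> t A / (\<epsilon> * NN)" if A: "A \<in> Bad" for A
    using A e NN_pos unfolding Bad_def by (simp add: field_simps)
  have sum_all: "sum t (Asets k m) \<le> 2 ^ k * NN"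
  proof -
    have "sum t (Asets k m) \<le> 2 ^ k * NF k h m a (Asets k m)" unfolding t_def by (rule sum_t_le[OF fin_Asets])
    also have "\<dots> \<le> 2 ^ k * NN" unfolding NN_def by (intro mult_left_mono NF_le) auto
    finally show ?thesis .
  qed
  have sum_wt: "(\<Sum>A\<in>Bad. q ^ card A) \<le> 2 ^ k / \<epsilon>"
  proof -
    have "(\<Sum>A\<in>Bad. q ^ card A) \<le> (\<Sum>A\<in>Bad. t A / (\<epsilon> * NN))" by (intro sum_mono wt_le_t)
    also have "\<dots> = sum t Bad / (\<epsilon> * NN)" by (simp add: sum_divide_distrib)
    also have "\<dots> \<le> sum t (Asets k m) / (\<epsilon> * NN)"
      using e NN_pos by (intro divide_right_mono sum_mono2 fin_Asets Bad_sub t_nn) auto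
    also have "\<dots> \<le> 2 ^ k * NN / (\<epsilon> * NN)" using e NN_pos sum_all by (intro divide_right_mono) auto
    also have "\<dots> = 2 ^ k / \<epsilon>" using NN_pos by simp
    finally show ?thesis .
  qed
  have grp: "\<forall>F. F \<subseteq> Bad \<longrightarrow> (\<Sum>A\<in>F. q ^ card A) \<le> 1/2 \<longrightarrow> sum t F \<le> 2 ^ (k+1) * NN * DD"
  proof (intro allI impI)
    fix F assume F: "F \<subseteq> Bad" "(\<Sum>A\<in>F. q ^ card A) \<le> 1/2"
    have finF: "finite F" using F(1) finBad finite_subset by blast
    have "measure_pmf.prob (sampling m q) (EF F) \<le> (\<Sum>A\<in>F. q ^ card A)"
    proof (rule P_union)
      fix A assume "A \<in> F" thus "A \<subseteq> {1..m}" using F(1) Bad_sub Asets_sub by blast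
    qed (use q finF in auto)
    hence P2: "measure_pmf.prob (sampling m q) (EF F) \<le> 1/2" using F(2) by simp
    have "NF k h m a F * (1/2) \<le> NF k h m a F * (1 - measure_pmf.prob (sampling m q) (EF F))"
      using P2 NF_nn[of k h m a F] by (intro mult_left_mono) auto
    also have "\<dots> \<le> NN * DD" by (rule fam)
    finally have "NF k h m a F \<le> 2 * NN * DD" by simp
    moreover have "sum t F \<le> 2 ^ k * NF k h m a F" unfolding t_def by (rule sum_t_le[OF finF])
    ultimately have "sum t F \<le> 2 ^ k * (2 * NN * DD)"
      by (meson mult_left_mono order_trans zero_le_numeral zero_le_power)
    thus "sum t F \<le> 2 ^ (k+1) * NN * DD" by (simp add: algebra_simps)
  qed
  have part: "sum t Bad \<le> (4 * (\<Sum>A\<in>Bad. q ^ card A) + 1) * (2 ^ (k+1) * NN * DD)"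
    by (rule partition_bound[OF finBad _ _ grp]) (use wt_small q t_nn NN_pos DD_nn in auto)
  also have "\<dots> \<le> (4 * (2 ^ k / \<epsilon>) + 1) * (2 ^ (k+1) * NN * DD)"
    using sum_wt NN_pos DD_nn by (intro mult_right_mono) auto
  finally have "sum t Bad \<le> (4 * (2 ^ k / \<epsilon>) + 1) * (2 ^ (k+1) * NN * DD)" .
  hence "sum t Bad / NN \<le> (4 * 2 ^ k / \<epsilon> + 1) * 2 ^ (k + 1) * DD"
    using NN_pos by (simp add: divide_le_eq mult_ac)
  thus ?thesis using Phi_eq unfolding NN_def DD_def t_def by simp
qed

lemma aux_ineq: "(P::real) \<le> u + x \<Longrightarrow> x < y \<Longrightarrow> y = e/4 \<Longrightarrow> u = e/2 \<Longrightarrow> 0 < e \<Longrightarrow> P < e"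
  by linarith

theorem theorem2p2:
  fixes m :: "nat \<Rightarrow> nat" and a :: "nat \<Rightarrow> nat \<Rightarrow> nat \<Rightarrow> bool"
    and k :: nat and h :: "nat \<Rightarrow> nat \<Rightarrow> bool" and p :: "nat \<Rightarrow> real"
  assumes G_simple: "\<forall>n\<ge>1. simple_graph (m n) (a n)"
    and m_lim: "filterlim m at_top sequentially"
    and N_pos: "\<forall>n\<ge>1. NHG k h (m n) (a n) > 0"
    and H_conn: "connected_graph k h"
    and p_range: "\<forall>n\<ge>1. 0 < p n \<and> p n < 1"
    and p_limsup: "limsup (\<lambda>n. ereal (p n)) < 1"
  shows "(\<forall>\<epsilon>>0. (\<lambda>n. measure_pmf.prob (sampling (m n) (p n))
              {X. \<bar>HT_est k h (m n) (a n) (p n) X / NHG k h (m n) (a n) - 1\<bar> > \<epsilon>})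
            \<longlonglongrightarrow> 0)
    \<longleftrightarrow>
    (\<forall>\<epsilon>>0. (\<lambda>n. (1 / NHG k h (m n) (a n)) *
              (\<Sum>A\<in>{A. A \<subseteq> {1..m n} \<and> 1 \<le> card A \<and> card A \<le> k}.
                 local_count k h (m n) (a n) A *
                 (if local_count k h (m n) (a n) A > \<epsilon> * p n ^ card A * NHG k h (m n) (a n)
                  then 1 else 0)))
            \<longlonglongrightarrow> 0)"
proof -
  define Pr where "Pr = (\<lambda>\<delta> n. measure_pmf.prob (sampling (m n) (p n))
              {X. \<bar>HT_est k h (m n) (a n) (p n) X / NHG k h (m n) (a n) - 1\<bar> > \<delta>})"
  define Phi where "Phi = (\<lambda>\<epsilon> n. (1 / NHG k h (m n) (a n)) *
              (\<Sum>A\<in>Asets k (m n).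
                 local_count k h (m n) (a n) A *
                 (if local_count k h (m n) (a n) A > \<epsilon> * p n ^ card A * NHG k h (m n) (a n)
                  then 1 else 0)))"
  have Pr_nn: "0 \<le> Pr \<delta> n" for \<delta> n unfolding Pr_def by simp
  have Phi_nn: "0 \<le> Phi \<epsilon> n" for \<epsilon> n
  proof -
    have "0 \<le> NHG k h (m n) (a n)" by (rule NHG_nn)
    moreover have "0 \<le> (\<Sum>A\<in>Asets k (m n).
                 local_count k h (m n) (a n) A *
                 (if local_count k h (m n) (a n) A > \<epsilon> * p n ^ card A * NHG k h (m n) (a n)
                  then 1 else (0::real)))"
      by (intro sum_nonneg mult_nonneg_nonneg lc_nn) auto
    ultimately show ?thesis unfolding Phi_def by (intro mult_nonneg_nonneg) auto
  qed
  obtain z where z: "limsup (\<lambda>n. ereal (p n)) < z" "z < 1" using dense[OF p_limsup] by blast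
  have zfin: "z \<noteq> \<infinity>" "z \<noteq> -\<infinity>" using z by auto
  define q0 where "q0 = real_of_ereal z"
  have q0: "q0 < 1" using z zfin unfolding q0_def by (cases z) auto
  have ev_p: "eventually (\<lambda>n. p n < q0) sequentially"
  proof -
    have "eventually (\<lambda>n. ereal (p n) < z) sequentially" by (rule Limsup_lessD[OF z(1)])
    thus ?thesis unfolding q0_def using zfin by (cases z) auto
  qed
  have ev_1: "eventually (\<lambda>n. n \<ge> 1) sequentially" by (rule eventually_ge_at_top)
  have lim_iff: "(f \<longlonglongrightarrow> 0) \<longleftrightarrow> (\<forall>\<eta>>0. eventually (\<lambda>n. f n < \<eta>) sequentially)"
    if "\<And>n. 0 \<le> f n" for f :: "nat \<Rightarrow> real"
  proof
    assume "f \<longlonglongrightarrow> 0"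
    thus "\<forall>\<eta>>0. eventually (\<lambda>n. f n < \<eta>) sequentially" by (auto dest: order_tendstoD(2))
  next
    assume H: "\<forall>\<eta>>0. eventually (\<lambda>n. f n < \<eta>) sequentially"
    show "f \<longlonglongrightarrow> 0" unfolding tendsto_iff dist_real_def
    proof (intro allI impI)
      fix \<eta> :: real assume "0 < \<eta>"
      with H have "eventually (\<lambda>n. f n < \<eta>) sequentially" by blast
      thus "eventually (\<lambda>n. \<bar>f n - 0\<bar> < \<eta>) sequentially" using that by (auto elim: eventually_mono)
    qed
  qed
  have "(\<forall>\<delta>>0. Pr \<delta> \<longlonglongrightarrow> 0) \<longleftrightarrow> (\<forall>\<epsilon>>0. Phi \<epsilon> \<longlonglongrightarrow> 0)"
  proof
    assume H1: "\<forall>\<delta>>0. Pr \<delta> \<longlonglongrightarrow> 0"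
    show "\<forall>\<epsilon>>0. Phi \<epsilon> \<longlonglongrightarrow> 0"
    proof (intro allI impI)
      fix \<epsilon> :: real assume e: "0 < \<epsilon>"
      show "Phi \<epsilon> \<longlonglongrightarrow> 0" unfolding lim_iff[OF Phi_nn]
      proof (intro allI impI)
        fix \<eta> :: real assume eta: "0 < \<eta>"
        define C :: real where "C = (4 * 2 ^ k / \<epsilon> + 1) * 2 ^ (k + 1)"
        have C: "0 < C" unfolding C_def using e by (auto intro!: mult_pos_pos add_nonneg_pos)
        define \<delta> where "\<delta> = min (\<eta> / (4 * C)) ((1 - q0) * \<epsilon> / 8)"
        have d: "0 < \<delta>" unfolding \<delta>_def using eta C e q0 by auto
        have ev_Pr: "eventually (\<lambda>n. Pr \<delta> n < \<delta>) sequentially"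
          using H1 d by (auto dest: order_tendstoD(2))
        show "eventually (\<lambda>n. Phi \<epsilon> n < \<eta>) sequentially"
          using ev_Pr ev_p ev_1
        proof eventually_elim
          case (elim n)
          have pn: "0 < p n" using p_range elim(3) by auto
          have Nn: "0 < NHG k h (m n) (a n)" using N_pos elim(3) by auto
          have Dle: "\<delta> + Pr \<delta> n \<le> (1 - q0) * \<epsilon> / 4" using elim(1) unfolding \<delta>_def by linarith
          have "Phi \<epsilon> n \<le> C * (\<delta> + Pr \<delta> n)"
            unfolding Phi_def C_def Pr_def
            by (rule nec_bound) (use pn elim(2) q0 Nn e d Dle in \<open>auto simp: Pr_def\<close>)
          also have "\<dots> < C * (2 * \<delta>)" using elim(1) C by (intro mult_strict_left_mono) auto
          also have "\<dots> \<le> C * (2 * (\<eta> / (4 * C)))" using C unfolding \<delta>_def by (intro mult_left_mono) auto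
          also have "\<dots> = \<eta> / 2" using C by (simp add: field_simps)
          finally show ?case using eta by linarith
        qed
      qed
    qed
  next
    assume H2: "\<forall>\<epsilon>>0. Phi \<epsilon> \<longlonglongrightarrow> 0"
    show "\<forall>\<delta>>0. Pr \<delta> \<longlonglongrightarrow> 0"
    proof (intro allI impI)
      fix \<delta> :: real assume d: "0 < \<delta>"
      show "Pr \<delta> \<longlonglongrightarrow> 0" unfolding lim_iff[OF Pr_nn]
      proof (intro allI impI)
        fix \<eta> :: real assume eta: "0 < \<eta>"
        define \<epsilon> :: real where "\<epsilon> = \<eta> * \<delta>^2 / (32 * 2 ^ k)"
        have e: "0 < \<epsilon>" unfolding \<epsilon>_def using eta d by simp
        have e16: "16 * 2 ^ k * \<epsilon> / \<delta>^2 = \<eta> / 2" unfolding \<epsilon>_def using d by (simp add: field_simps)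
        have ev_Phi: "eventually (\<lambda>n. Phi \<epsilon> n < \<eta> * \<delta> / 16) sequentially"
        proof (rule order_tendstoD(2))
          show "Phi \<epsilon> \<longlonglongrightarrow> 0" using H2 e by blast
          show "0 < \<eta> * \<delta> / 16" using eta d by simp
        qed
        show "eventually (\<lambda>n. Pr \<delta> n < \<eta>) sequentially"
          using ev_Phi ev_1
        proof eventually_elim
          case (elim n)
          have pn: "0 < p n" "p n \<le> 1" using p_range elim(2) by auto
          have Nn: "0 < NHG k h (m n) (a n)" using N_pos elim(2) by auto
          have b1: "Pr \<delta> n \<le> 16 * 2 ^ k * \<epsilon> / \<delta>^2 + 4 / \<delta> * Phi \<epsilon> n"
            unfolding Phi_def Pr_def by (rule suff_bound) (use pn Nn e d in auto)
          have b2: "4 / \<delta> * Phi \<epsilon> n < 4 / \<delta> * (\<eta> * \<delta> / 16)"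
            using elim(1) d by (intro mult_strict_left_mono) auto
          have b3: "4 / \<delta> * (\<eta> * \<delta> / 16) = \<eta> / 4" using d by (simp add: field_simps)
          show ?case by (rule aux_ineq[OF b1 b2 b3 e16 eta])
        qed
      qed
    qed
  qed
  thus ?thesis unfolding Pr_def Phi_def Asets_def by simp
qed

end
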